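(* There exists a function $g:(0,\infty)\to(0,\infty)$ such that for every $\varepsilon>0$ and all integers $n\ge 1$ and $k\ge 0$ there exists a tournament tree $T$ with exactly $n$ distinct seed position names and of height at most $\lceil (1+\varepsilon)\log_2 n\rceil+g(\varepsilon^{-1})\cdot k$ that is robust for $(n,k)$.
   Context: A tournament tree is a rooted full binary tree (every internal vertex has exactly two children) whose leaves are labeled with binary strings (seed position names); different leaves may share a name. Height is the maximum number of edges on a root-to-leaf path. A winner function on a player set $N$ is $w:N\times N\to N$ with $w(i,j)\in\{i,j\}$; it exhibits a strongest player $i_w$ if $w(i_w,j)=w(j,i_w)=i_w$ for all $j\in N$. A seeding is a bijection $\sigma$ from $N$ onto the set of seed position names. Conduction of $(N,T,w,\sigma)$: each leaf named $x$ is occupied by $\sigma^{-1}(x)$; at each internal vertex $v$ with children occupied by $i,j$, one of $i,j$ is promoted to $v$, normally $w(i,j)$; the game at $v$ is manipulated if the other one is promoted. The player at the root wins. $T$ is robust for $(n,k)$ if for every set $N$ of $n$ players, every winner function $w$ on $N$ exhibiting a strongest player $i_w$, and every seeding $\sigma$, the player $i_w$ wins $(N,T,w,\sigma)$ whenever every leaf-to-root path of $T$ contains at most $k$ vertices whose game is manipulated. *)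

theory Defs
  imports Complex_Main
begin

datatype ttree = Leaf "bool list" | Node ttree ttree

fun names :: "ttree \<Rightarrow> bool list set" where
  "names (Leaf x) = {x}"
| "names (Node l r) = names l \<union> names r"

fun height :: "ttree \<Rightarrow> nat" where
  "height (Leaf x) = 0"
| "height (Node l r) = Suc (max (height l) (height r))"

text \<open>Vertices are addressed by their path from the root (False = left child, True = right child).
  Conduction: occ gives the player occupying a seed position name (i.e. the inverse of the seeding);
  M is the set of vertices whose game is manipulated.\<close>
fun conduct :: "(nat \<Rightarrow> nat \<Rightarrow> nat) \<Rightarrow> (bool list \<Rightarrow> nat) \<Rightarrow> bool list set \<Rightarrow> bool list \<Rightarrow> ttree \<Rightarrow> nat" where
  "conduct w occ M p (Leaf x) = occ x"
| "conduct w occ M p (Node l r) =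
     (let i = conduct w occ M (p @ [False]) l;
          j = conduct w occ M (p @ [True]) r
      in if p \<in> M then (if w i j = i then j else i) else w i j)"

fun max_manip :: "bool list set \<Rightarrow> bool list \<Rightarrow> ttree \<Rightarrow> nat" where
  "max_manip M p (Leaf x) = 0"
| "max_manip M p (Node l r) =
     (if p \<in> M then 1 else 0) + max (max_manip M (p @ [False]) l) (max_manip M (p @ [True]) r)"

definition winner_function :: "nat set \<Rightarrow> (nat \<Rightarrow> nat \<Rightarrow> nat) \<Rightarrow> bool" where
  "winner_function N w \<longleftrightarrow> (\<forall>i\<in>N. \<forall>j\<in>N. w i j = i \<or> w i j = j)"

definition strongest :: "nat set \<Rightarrow> (nat \<Rightarrow> nat \<Rightarrow> nat) \<Rightarrow> nat \<Rightarrow> bool" where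
  "strongest N w iw \<longleftrightarrow> iw \<in> N \<and> (\<forall>j\<in>N. w iw j = iw \<and> w j iw = iw)"

definition robust :: "nat \<Rightarrow> nat \<Rightarrow> ttree \<Rightarrow> bool" where
  "robust n k T \<longleftrightarrow>
    (\<forall>N :: nat set. \<forall>w iw \<sigma> M.
       finite N \<and> card N = n \<and> winner_function N w \<and> strongest N w iw \<and>
       bij_betw \<sigma> N (names T) \<and> max_manip M [] T \<le> k
       \<longrightarrow> conduct w (inv_into N \<sigma>) M [] T = iw)"

end

theory Submission
  imports Defs
begin


fun rob :: "bool list \<Rightarrow> nat \<Rightarrow> ttree \<Rightarrow> bool" where
  "rob x c (Leaf y) = (y = x)"
| "rob x 0 (Node l r) = (rob x 0 l \<or> rob x 0 r)"
| "rob x (Suc c) (Node l r) = ((rob x (Suc c) l \<and> rob x c r) \<or> (rob x c l \<and> rob x (Suc c) r))"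

lemma rob_mono_Suc: "rob x (Suc c) T \<Longrightarrow> rob x c T"
proof (induction T arbitrary: c)
  case (Leaf y) then show ?case by simp
next
  case (Node l r)
  then show ?case by (cases c) auto
qed

lemma rob_names: "rob x c T \<Longrightarrow> x \<in> names T"
proof (induction T arbitrary: c)
  case (Leaf y) then show ?case by simp
next
  case (Node l r)
  then show ?case by (cases c) auto
qed

lemma rob_NodeL: "rob x c l \<Longrightarrow> (c > 0 \<Longrightarrow> rob x (c - 1) r) \<Longrightarrow> rob x c (Node l r)"
  by (cases c) auto

lemma rob_NodeR: "rob x c r \<Longrightarrow> (c > 0 \<Longrightarrow> rob x (c - 1) l) \<Longrightarrow> rob x c (Node l r)"
  by (cases c) auto

lemma rob_Node_all: "rob x c l \<Longrightarrow> rob x c r \<Longrightarrow> rob x c (Node l r)"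
proof (cases c)
  case (Suc c') assume "rob x c l" "rob x c r" then show ?thesis using Suc rob_mono_Suc[of x c' r] by simp
qed simp

lemma conduct_in:
  assumes "winner_function N w" "\<forall>y\<in>names T. occ y \<in> N"
  shows "conduct w occ M p T \<in> N"
  using assms(2)
proof (induction T arbitrary: p)
  case (Leaf x) then show ?case by simp
next
  case (Node l r)
  then have i: "conduct w occ M (p @ [False]) l \<in> N" and j: "conduct w occ M (p @ [True]) r \<in> N" by auto
  moreover have "w (conduct w occ M (p @ [False]) l) (conduct w occ M (p @ [True]) r) = conduct w occ M (p @ [False]) l \<or>
     w (conduct w occ M (p @ [False]) l) (conduct w occ M (p @ [True]) r) = conduct w occ M (p @ [True]) r"
    using i j assms(1) unfolding winner_function_def by blast
  ultimately show ?case by (auto simp: Let_def)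
qed

lemma conduct_win:
  assumes wf: "winner_function N w" and st: "strongest N w iw" and occx: "occ x = iw"
  shows "\<forall>y\<in>names T. occ y \<in> N \<Longrightarrow> rob x c T \<Longrightarrow> max_manip M p T \<le> c \<Longrightarrow> conduct w occ M p T = iw"
proof (induction T arbitrary: p c)
  case (Leaf y) then show ?case using occx by simp
next
  case (Node l r)
  define i where "i = conduct w occ M (p @ [False]) l"
  define j where "j = conduct w occ M (p @ [True]) r"
  have iN: "i \<in> N" unfolding i_def using Node.prems(1) by (intro conduct_in[OF wf]) auto
  have jN: "j \<in> N" unfolding j_def using Node.prems(1) by (intro conduct_in[OF wf]) auto
  have iwN: "iw \<in> N" and sw: "\<And>j. j \<in> N \<Longrightarrow> w iw j = iw \<and> w j iw = iw"
    using st unfolding strongest_def by auto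
  have eq: "conduct w occ M p (Node l r) = (if p \<in> M then (if w i j = i then j else i) else w i j)"
    by (simp add: i_def j_def Let_def)
  show ?case
  proof (cases "p \<in> M")
    case True
    then have ml: "max_manip M (p @ [False]) l \<le> c - 1" and mr: "max_manip M (p @ [True]) r \<le> c - 1"
      and cpos: "c > 0"
      using Node.prems(3) by auto
    obtain c' where c': "c = Suc c'" using cpos by (cases c) auto
    have "(rob x (Suc c') l \<and> rob x c' r) \<or> (rob x c' l \<and> rob x (Suc c') r)"
      using Node.prems(2) unfolding c' by simp
    then have "rob x c' l" "rob x c' r" using rob_mono_Suc by blast+
    then have "i = iw" "j = iw" using Node.IH(1)[where p="p @ [False]" and c=c'] Node.IH(2)[where p="p @ [True]" and c=c'] Node.prems(1) ml mr c'
      unfolding i_def j_def by auto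
    then show ?thesis using eq True by simp
  next
    case False
    then have ml: "max_manip M (p @ [False]) l \<le> c" and mr: "max_manip M (p @ [True]) r \<le> c"
      using Node.prems(3) by auto
    have "rob x c l \<or> rob x c r"
      using Node.prems(2) by (cases c) auto
    then have "i = iw \<or> j = iw" using Node.IH(1)[where p="p @ [False]" and c=c] Node.IH(2)[where p="p @ [True]" and c=c] Node.prems(1) ml mr
      unfolding i_def j_def by auto
    then show ?thesis
    proof
      assume "i = iw" then show ?thesis using eq False sw[OF jN] by simp
    next
      assume "j = iw" then show ?thesis using eq False sw[OF iN] by simp
    qed
  qed
qed

lemma robust_of_rob:
  assumes "\<forall>x\<in>names T. rob x k T"
  shows "robust n k T"
  unfolding robust_def
proof (intro allI impI, elim conjE)
  fix N w iw \<sigma> M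
  assume wf: "winner_function N w" and st: "strongest N w iw" and bij: "bij_betw \<sigma> N (names T)"
    and mm: "max_manip M [] T \<le> k"
  have iwN: "iw \<in> N" using st unfolding strongest_def by auto
  have x: "\<sigma> iw \<in> names T" by (rule bij_betw_apply[OF bij iwN])
  have occx: "inv_into N \<sigma> (\<sigma> iw) = iw"
    using bij iwN by (simp add: bij_betw_def inv_into_f_f)
  have im: "\<sigma> ` N = names T" using bij by (simp add: bij_betw_def)
  have occN: "\<forall>y\<in>names T. inv_into N \<sigma> y \<in> N"
  proof
    fix y assume "y \<in> names T"
    then have "y \<in> \<sigma> ` N" using im by simp
    then show "inv_into N \<sigma> y \<in> N" by (rule inv_into_into)
  qed
  have rb: "rob (\<sigma> iw) k T" using assms x by blast
  show "conduct w (inv_into N \<sigma>) M [] T = iw"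
    by (rule conduct_win[OF wf st occx occN rb mm])
qed



fun Blk :: "nat \<Rightarrow> (bool list \<Rightarrow> ttree) \<Rightarrow> ttree" where
  "Blk 0 F = F []"
| "Blk (Suc m) F = Node (Blk m (\<lambda>v. F (False # v))) (Blk m (\<lambda>v. F (True # v)))"

lemma Blk_all: "(\<And>v. length v = m \<Longrightarrow> rob x c (F v)) \<Longrightarrow> rob x c (Blk m F)"
proof (induction m arbitrary: F)
  case 0 then show ?case by simp
next
  case (Suc m)
  show ?case by simp (intro rob_Node_all Suc.IH; simp add: Suc.prems)
qed

lemma Blk_rob: "length u = m \<Longrightarrow> rob x c (F u) \<Longrightarrow> (c > 0 \<Longrightarrow> \<forall>v. length v = m \<longrightarrow> rob x (c - 1) (F v))
   \<Longrightarrow> rob x c (Blk m F)"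
proof (induction m arbitrary: F u)
  case 0 then show ?case by simp
next
  case (Suc m)
  then obtain b u' where u: "u = b # u'" "length u' = m" by (cases u) auto
  show ?case
  proof (cases b)
    case True
    have "rob x c (Blk m (\<lambda>v. F (True # v)))"
      using Suc.IH[of u' "\<lambda>v. F (True # v)"] Suc.prems u True by auto
    moreover have "c > 0 \<Longrightarrow> rob x (c - 1) (Blk m (\<lambda>v. F (False # v)))"
      using Suc.prems by (intro Blk_all) auto
    ultimately show ?thesis by (simp add: rob_NodeR)
  next
    case False
    have "rob x c (Blk m (\<lambda>v. F (False # v)))"
      using Suc.IH[of u' "\<lambda>v. F (False # v)"] Suc.prems u False by auto
    moreover have "c > 0 \<Longrightarrow> rob x (c - 1) (Blk m (\<lambda>v. F (True # v)))"
      using Suc.prems by (intro Blk_all) auto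
    ultimately show ?thesis by (simp add: rob_NodeL)
  qed
qed

lemma Blk_names: "(\<And>v. length v = m \<Longrightarrow> names (F v) \<subseteq> A) \<Longrightarrow> names (Blk m F) \<subseteq> A"
  by (induction m arbitrary: F) auto

lemma Blk_height: "(\<And>v. length v = m \<Longrightarrow> height (F v) \<le> h) \<Longrightarrow> height (Blk m F) \<le> m + h"
  by (induction m arbitrary: F) (auto simp: max_def)

definition dec :: "nat \<Rightarrow> bool list set \<Rightarrow> bool list \<Rightarrow> bool list list \<Rightarrow> bool list" where
  "dec K S s0 st = (let s = concat (take K st) in if s \<in> S then s else s0)"

fun Tr :: "nat \<Rightarrow> nat \<Rightarrow> bool list set \<Rightarrow> bool list \<Rightarrow> nat \<Rightarrow> bool list list \<Rightarrow> ttree" where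
  "Tr m K S s0 0 st = Leaf (dec K S s0 st)"
| "Tr m K S s0 (Suc r) st = Node (Tr m K S s0 r (butlast st)) (Blk m (\<lambda>v. Tr m K S s0 r (st @ [v])))"

lemma Tr_names: "s0 \<in> S \<Longrightarrow> names (Tr m K S s0 r st) \<subseteq> S"
proof (induction r arbitrary: st)
  case 0 then show ?case by (simp add: dec_def Let_def)
next
  case (Suc r)
  have "names (Blk m (\<lambda>v. Tr m K S s0 r (st @ [v]))) \<subseteq> S"
    by (rule Blk_names) (rule Suc.IH[OF Suc.prems])
  then show ?case using Suc.IH[OF Suc.prems, of "butlast st"] by simp
qed

lemma Tr_height: "height (Tr m K S s0 r st) \<le> r * (m + 1)"
proof (induction r arbitrary: st)
  case 0 then show ?case by simp
next
  case (Suc r)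
  have "height (Blk m (\<lambda>v. Tr m K S s0 r (st @ [v]))) \<le> m + r * (m + 1)"
    by (rule Blk_height) (rule Suc.IH)
  then show ?case using Suc.IH[of "butlast st"] by (simp add: max_def)
qed

lemma concat_blocks: "length x \<le> K * m \<Longrightarrow> concat (map (\<lambda>i. take m (drop (i*m) x)) [0..<K]) = x"
proof (induction K arbitrary: x)
  case 0 then show ?case by simp
next
  case (Suc K)
  have "concat (map (\<lambda>i. take m (drop (i*m) x)) [0..<Suc K])
      = take m x @ concat (map (\<lambda>i. take m (drop (i*m) (drop m x))) [0..<K])"
    by (simp add: upt_conv_Cons map_Suc_upt[symmetric] add.commute comp_def del: upt_Suc)
  also have "\<dots> = take m x @ drop m x" using Suc.prems by (subst Suc.IH) auto
  finally show ?case by simp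
qed

lemma Tr_rob:
  assumes xS: "x \<in> S" and lx: "length x = K * m"
    and tgt: "tgt = (\<lambda>i. if i < K then take m (drop (i*m) x) else replicate m False)"
  shows "g \<le> length st \<Longrightarrow> (\<forall>i<g. st!i = tgt i) \<Longrightarrow> K + 2*c + length st \<le> r + 2*g
     \<Longrightarrow> rob x c (Tr m K S s0 r st)"
proof (induction r arbitrary: st c g)
  case 0
  then have gK: "K \<le> g" by simp
  have "take K st = map tgt [0..<K]"
    using 0 gK by (intro nth_equalityI) auto
  moreover have "map tgt [0..<K] = map (\<lambda>i. take m (drop (i*m) x)) [0..<K]" by (auto simp: tgt)
  ultimately have "concat (take K st) = x"
    using concat_blocks[of x K m] lx by simp
  then show ?case using xS by (simp add: dec_def)
next
  case (Suc r)
  have ltgt: "length (tgt i) = m" for i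
  proof (cases "i < K")
    case True
    then have "Suc i * m \<le> K * m" by (intro mult_le_mono1) simp
    then have "i * m + m \<le> length x" using lx by simp
    then show ?thesis using True by (simp add: tgt)
  next
    case False then show ?thesis by (simp add: tgt)
  qed
  show ?case
  proof (cases "\<forall>i<length st. st!i = tgt i")
    case True
    have A: "rob x c (Blk m (\<lambda>v. Tr m K S s0 r (st @ [v])))"
    proof (rule Blk_rob[of "tgt (length st)"])
      show "length (tgt (length st)) = m" by (rule ltgt)
      show "rob x c (Tr m K S s0 r (st @ [tgt (length st)]))"
        using Suc.prems True by (intro Suc.IH[where g="Suc (length st)"]) (auto simp: nth_append less_Suc_eq)
      show "\<forall>v. length v = m \<longrightarrow> rob x (c - 1) (Tr m K S s0 r (st @ [v]))" if "c > 0"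
        using Suc.prems True that by (intro allI impI Suc.IH[where g="length st"]) (auto simp: nth_append)
    qed
    have B: "rob x (c - 1) (Tr m K S s0 r (butlast st))" if "c > 0"
      using Suc.prems True that by (intro Suc.IH[where g="length st - 1"]) (auto simp: nth_butlast)
    show ?thesis using A B by (simp add: rob_NodeR)
  next
    case False
    then have glt: "g < length st" using Suc.prems(1,2) by (metis le_neq_implies_less)
    have A: "rob x c (Tr m K S s0 r (butlast st))"
      using Suc.prems glt by (intro Suc.IH[where g=g]) (auto simp: nth_butlast)
    have B: "rob x (c - 1) (Blk m (\<lambda>v. Tr m K S s0 r (st @ [v])))" if "c > 0"
      using Suc.prems that by (intro Blk_all Suc.IH[where g=g]) (auto simp: nth_append)
    show ?thesis using A B by (simp add: rob_NodeL)
  qed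
qed



lemma subset_names:
  assumes "n \<le> 2 ^ l"
  obtains S :: "bool list set" where "S \<subseteq> {v. length v = l}" "card S = n" "finite S"
proof -
  have "card {v :: bool list. set v \<subseteq> UNIV \<and> length v = l} = 2 ^ l"
    using card_lists_length_eq[of "UNIV :: bool set" l] by simp
  then have "n \<le> card {v :: bool list. length v = l}" using assms by simp
  then obtain S where "S \<subseteq> {v :: bool list. length v = l}" "card S = n" "finite S"
    by (rule obtain_subset_with_card_n)
  then show ?thesis by (rule that)
qed

lemma nonempty_card:
  assumes "card S = n" "n \<ge> 1"
  obtains s0 where "s0 \<in> S"
proof -
  have "S \<noteq> {}" using assms by auto
  then show ?thesis using that by blast
qed

lemma tree_exists:
  assumes n: "n \<ge> 1" and nl: "n \<le> 2 ^ (K * m)"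
  shows "\<exists>T. card (names T) = n \<and> height T \<le> (K + 2*k) * (m + 1) \<and> robust n k T"
proof -
  obtain S :: "bool list set" where S: "S \<subseteq> {v. length v = K * m}" "card S = n" "finite S"
    using subset_names[OF nl] by blast
  obtain s0 where s0: "s0 \<in> S" using nonempty_card[OF S(2) n] by blast
  define T where "T = Tr m K S s0 (K + 2*k) []"
  have rb: "rob x k T" if "x \<in> S" for x
  proof -
    have lx: "length x = K * m" using that S(1) by auto
    show ?thesis unfolding T_def
      by (rule Tr_rob[OF that lx refl, where g=0]) simp_all
  qed
  have nm: "names T = S"
  proof
    show "names T \<subseteq> S" unfolding T_def by (rule Tr_names[OF s0])
    show "S \<subseteq> names T"
    proof
      fix x assume "x \<in> S"
      then show "x \<in> names T" using rb[of x] rob_names[of x k T] by simp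
    qed
  qed
  have "robust n k T" by (rule robust_of_rob) (simp add: nm rb)
  moreover have "height T \<le> (K + 2*k) * (m + 1)" unfolding T_def by (rule Tr_height)
  ultimately show ?thesis using nm S(2) by blast
qed

lemma tree_exists0:
  assumes n: "n \<ge> 1" and nl: "n \<le> 2 ^ L"
  shows "\<exists>T. card (names T) = n \<and> height T \<le> L \<and> robust n 0 T"
proof -
  obtain S :: "bool list set" where S: "S \<subseteq> {v. length v = L}" "card S = n" "finite S"
    using subset_names[OF nl] by blast
  obtain s0 where s0: "s0 \<in> S" using nonempty_card[OF S(2) n] by blast
  define T where "T = Blk L (\<lambda>v. Leaf (if v \<in> S then v else s0))"
  have rb: "rob x 0 T" if "x \<in> S" for x
  proof -
    have lx: "length x = L" using that S(1) by auto
    show ?thesis unfolding T_def by (rule Blk_rob[OF lx]) (simp_all add: that)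
  qed
  have nm: "names T = S"
  proof
    show "names T \<subseteq> S" unfolding T_def using s0 by (intro Blk_names) auto
    show "S \<subseteq> names T"
    proof
      fix x assume "x \<in> S"
      then show "x \<in> names T" using rb[of x] rob_names[of x 0 T] by simp
    qed
  qed
  have "robust n 0 T" by (rule robust_of_rob) (simp add: nm rb)
  moreover have "height T \<le> L + 0" unfolding T_def by (rule Blk_height) simp
  ultimately show ?thesis using nm S(2) by auto
qed



theorem corollary14:
  shows "\<exists>g :: real \<Rightarrow> real. (\<forall>x>0. g x > 0) \<and>
    (\<forall>\<epsilon>::real. \<epsilon> > 0 \<longrightarrow> (\<forall>n::nat. n \<ge> 1 \<longrightarrow> (\<forall>k::nat.
      \<exists>T. card (names T) = n \<and>
          real (height T) \<le> real_of_int \<lceil>(1 + \<epsilon>) * log 2 (real n)\<rceil> + g (1 / \<epsilon>) * real k \<and>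
          robust n k T)))"
proof (intro exI[of _ "\<lambda>y. 4 * (real (nat \<lceil>y\<rceil>) + 1)"] conjI allI impI)
  fix y :: real assume "y > 0" have "0 < real (nat \<lceil>y\<rceil>) + 1" using of_nat_0_le_iff[of "nat \<lceil>y\<rceil>"] by linarith then show "4 * (real (nat \<lceil>y\<rceil>) + 1) > 0" by simp
next
  fix \<epsilon> :: real and n k :: nat
  assume e: "\<epsilon> > 0" and n: "n \<ge> 1"
  define lg where "lg = log 2 (real n)"
  define m where "m = nat \<lceil>1 / \<epsilon>\<rceil>"
  define L where "L = nat \<lceil>lg\<rceil>"
  have lg0: "lg \<ge> 0" unfolding lg_def using n by simp
  have "0 < 1 / \<epsilon>" using e by simp
  then have "0 < \<lceil>1 / \<epsilon>\<rceil>" by simp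
  then have c1: "int 1 \<le> \<lceil>1 / \<epsilon>\<rceil>" and c0: "0 \<le> \<lceil>1 / \<epsilon>\<rceil>" by linarith+
  have m1: "m \<ge> 1" unfolding m_def by (rule le_nat_iff[OF c0, THEN iffD2, OF c1])
  have me: "1 / \<epsilon> \<le> real m" unfolding m_def by linarith
  have me1: "1 \<le> real m * \<epsilon>" using me e by (simp add: pos_divide_le_eq)
  have me2: "1 / real m \<le> \<epsilon>" using me1 m1 by (simp add: divide_le_eq mult.commute)
  have Lr: "real L = real_of_int \<lceil>lg\<rceil>" unfolding L_def using lg0 by simp
  have L1: "lg \<le> real L" "real L < lg + 1" using Lr by linarith+
  have "real n \<le> 2 powr real L" using L1(1) n unfolding lg_def by (simp add: log_le_iff)
  then have "real n \<le> 2 ^ L" by (simp add: powr_realpow)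
  then have nL: "n \<le> 2 ^ L" by (simp only: of_nat_le_iff[symmetric, where 'a=real] of_nat_power of_nat_numeral)
  have ceil1: "real L \<le> real_of_int \<lceil>(1 + \<epsilon>) * lg\<rceil>"
    unfolding Lr using e lg0 by (intro of_int_le_iff[THEN iffD2] ceiling_mono) (simp add: algebra_simps)
  show "\<exists>T. card (names T) = n \<and>
          real (height T) \<le> real_of_int \<lceil>(1 + \<epsilon>) * log 2 (real n)\<rceil> + 4 * (real (nat \<lceil>1 / \<epsilon>\<rceil>) + 1) * real k \<and>
          robust n k T"
  proof (cases "k = 0")
    case True
    obtain T where T: "card (names T) = n" "height T \<le> L" "robust n 0 T" using tree_exists0[OF n nL] by blast
    then show ?thesis using ceil1 True unfolding lg_def by (intro exI[of _ T]) auto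
  next
    case False
    define K where "K = (L + m - 1) div m"
    have dm: "L + m - 1 = K * m + (L + m - 1) mod m" unfolding K_def by simp
    have "(L + m - 1) mod m < m" using m1 by simp
    then have KmL: "L \<le> K * m" and KmU: "K * m \<le> L + m - 1" using dm m1 by linarith+
    have "(2::nat) ^ L \<le> 2 ^ (K * m)" by (rule power_increasing[OF KmL]) simp
    then have nKm: "n \<le> 2 ^ (K * m)" using nL by (rule le_trans[rotated])
    obtain T where T: "card (names T) = n" "height T \<le> (K + 2*k) * (m + 1)" "robust n k T"
      using tree_exists[OF n nKm] by blast
    have "real (K * m) \<le> real (L + m - 1)" using KmU by (simp only: of_nat_le_iff)
    then have KmUr: "real K * real m \<le> real L + real m - 1" using m1 by (simp add: of_nat_diff)
    have K1: "real K \<le> real L / real m + 1" using KmUr m1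
      by (simp add: field_simps)
    have K2: "real L / real m \<le> \<epsilon> * lg + 1"
    proof -
      have "real L / real m \<le> (lg + 1) / real m" using L1 m1 by (simp add: divide_right_mono)
      also have "\<dots> = lg * (1 / real m) + 1 / real m" by (simp add: add_divide_distrib)
      also have "\<dots> \<le> lg * \<epsilon> + 1" using me2 lg0 m1 by (intro add_mono mult_left_mono) auto
      finally show ?thesis by (simp add: mult.commute)
    qed
    have k1: "real k \<ge> 1" using False by simp
    have "real (height T) \<le> (real K + 2 * real k) * (real m + 1)"
      using T(2) by (simp only: of_nat_le_iff[symmetric, where 'a=real]) (simp add: algebra_simps)
    also have "\<dots> = real K * real m + real K + 2 * real k * (real m + 1)" by (simp add: algebra_simps)
    also have "\<dots> \<le> (1 + \<epsilon>) * lg + 2 * (real m + 1) + 2 * real k * (real m + 1)"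
      using KmUr K1 K2 L1 by (simp add: algebra_simps)
    also have "\<dots> \<le> (1 + \<epsilon>) * lg + 4 * real k * (real m + 1)"
    proof -
      have "1 * (2 * (real m + 1)) \<le> real k * (2 * (real m + 1))"
        by (rule mult_right_mono[OF k1]) simp
      then show ?thesis by (simp add: algebra_simps)
    qed
    also have "\<dots> \<le> real_of_int \<lceil>(1 + \<epsilon>) * lg\<rceil> + 4 * (real m + 1) * real k"
      by (simp add: algebra_simps)
    finally show ?thesis using T unfolding lg_def m_def by (intro exI[of _ T]) auto
  qed
qed

end
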